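(* Let $M,K$ be real anti-symmetric $m\times m$ matrices, $S:\mathbb R^m\to\mathbb R$ smooth, $A$ real symmetric, and let $Q$ be an orthogonal matrix and $\Lambda$ a real $\lfloor m/2\rfloor\times\lfloor m/2\rfloor$ matrix with $$K=Q^T\begin{pmatrix}0&0&-\Lambda^T\\0&0&0\\\Lambda&0&0\end{pmatrix}Q\ (m\text{ odd}),\qquad K=Q^T\begin{pmatrix}0&-\Lambda^T\\\Lambda&0\end{pmatrix}Q\ (m\text{ even}).$$ Suppose $B=\beta M$ for some real $\beta$ and that the last $\lfloor m/2\rfloor$ columns of $MQ^T$ are zero. Let $\mathbf z_h$ be a solution of the semi-discrete DG scheme described in the context, and write $Q\mathbf z_h=(\mathbf u_h,w_h,\mathbf v_h)^T$ ($m$ odd) or $Q\mathbf z_h=(\mathbf u_h,\mathbf v_h)^T$ ($m$ even) with $\mathbf u_h,\mathbf v_h\in(V_h)^{\lfloor m/2\rfloor}$, $w_h\in V_h$. Let $\nabla_{\mathbf v}S(\mathbf z_h)$ denote the vector of the last $\lfloor m/2\rfloor$ components of $Q\nabla_{\mathbf z}S(\mathbf z_h)$, and let $$\widetilde A=Q^T\begin{pmatrix}I&0&0\\0&1&0\\0&0&-I\end{pmatrix}QA\ (m\text{ odd}),\qquad \widetilde A=Q^T\begin{pmatrix}I&0\\0&-I\end{pmatrix}QA\ (m\text{ even}).$$ Then the total energy $\mathcal E_h=\int_\Omega\big(S(\mathbf z_h)-\tfrac12K\partial_x\mathbf z_h\cdot\mathbf z_h\big)dx+\tfrac12\sum_j\big((K\{\mathbf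 z_h\}+A[\mathbf z_h])\cdot[\mathbf z_h]\big)_{j+\frac12}$ satisfies $$\mathcal E_h=\int_\Omega\big(S(\mathbf z_h)-\nabla_{\mathbf v}S(\mathbf z_h)\cdot\mathbf v_h\big)dx+\tfrac12\sum_j\big(\widetilde A[\mathbf z_h]\cdot[\mathbf z_h]\big)_{j+\frac12}.$$ In particular, if $A=\alpha Q^T\begin{pmatrix}0&0&\Lambda^T\\0&0&0\\\Lambda&0&0\end{pmatrix}Q$ ($m$ odd) or $A=\alpha Q^T\begin{pmatrix}0&\Lambda^T\\\Lambda&0\end{pmatrix}Q$ ($m$ even) with $\alpha\in[-\frac12,\frac12]$, then $\widetilde A$ is anti-symmetric and $\mathcal E_h=\int_\Omega\big(S(\mathbf z_h)-\nabla_{\mathbf v}S(\mathbf z_h)\cdot\mathbf v_h\big)dx$.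
   Context: Mesh and spaces: a one-dimensional domain $\Omega$ is partitioned into cells $I_j=[x_{j-1/2},x_{j+1/2}]$, $j=1,\dots,N$, with periodic boundary conditions (interface indices modulo $N$). For fixed $k\ge0$, $V_h=\{v\in L^2(\Omega): v|_{I_j}\text{ is a polynomial of degree}\le k\ \forall j\}$, $\mathbf V_h=(V_h)^m$. For $\mathbf v\in\mathbf V_h$, $\mathbf v^\pm_{j+1/2}$ are right/left limits at $x_{j+1/2}$, $\{\mathbf v\}=\frac12(\mathbf v^++\mathbf v^-)$, $[\mathbf v]=\mathbf v^+-\mathbf v^-$; subscript $j+\frac12$ means evaluation at $x_{j+1/2}$; $\partial_x$ is taken cellwise. The semi-discrete DG scheme: find $\mathbf z_h(t)\in\mathbf V_h$, continuously differentiable in $t$, such that for all $j$ and all $\boldsymbol\varphi\in\mathbf V_h$, $$\int_{I_j}M\partial_t\mathbf z_h\cdot\boldsymbol\varphi\,dx-\int_{I_j}K\mathbf z_h\cdot\partial_x\boldsymbol\varphi\,dx+\big(\widehat{K\mathbf z_h}\cdot\boldsymbol\varphi^-\big)_{j+\frac12}-\big(\widehat{K\mathbf z_h}\cdot\boldsymbol\varphi^+\big)_{j-\frac12}=\int_{I_j}\nabla_{\mathbf z}S(\mathbf z_h)\cdot\boldsymbol\varphi\,dx,$$ with $\widehat{K\mathbf z_h}=K\{\mathbf z_h\}+A[\mathbf z_h]+B\,\partial_t[\mathbf z_h]$ at each interface. *)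

theory Defs
  imports "HOL-Analysis.Analysis" "HOL-Computational_Algebra.Polynomial"
begin

text \<open>Vectors of R^m are represented as functions nat => real; only the
components with index < m matter (index 0 .. m-1).  Matrices are functions
nat => nat => real; only the entries with indices < m (resp. < p) matter.\<close>

definition vecs :: "nat \<Rightarrow> (nat \<Rightarrow> real) set" where
  "vecs m = {v. \<forall>i\<ge>m. v i = 0}"

definition dotv :: "nat \<Rightarrow> (nat \<Rightarrow> real) \<Rightarrow> (nat \<Rightarrow> real) \<Rightarrow> real" where
  "dotv m u v = (\<Sum>i<m. u i * v i)"

definition mv :: "nat \<Rightarrow> (nat \<Rightarrow> nat \<Rightarrow> real) \<Rightarrow> (nat \<Rightarrow> real) \<Rightarrow> (nat \<Rightarrow> real)" where
  "mv m A v = (\<lambda>i. if i < m then (\<Sum>j<m. A i j * v j) else 0)"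

definition mmul :: "nat \<Rightarrow> (nat \<Rightarrow> nat \<Rightarrow> real) \<Rightarrow> (nat \<Rightarrow> nat \<Rightarrow> real) \<Rightarrow> (nat \<Rightarrow> nat \<Rightarrow> real)" where
  "mmul m A B = (\<lambda>i j. \<Sum>l<m. A i l * B l j)"

definition mtr :: "(nat \<Rightarrow> nat \<Rightarrow> real) \<Rightarrow> (nat \<Rightarrow> nat \<Rightarrow> real)" where
  "mtr A = (\<lambda>i j. A j i)"

definition mscale :: "real \<Rightarrow> (nat \<Rightarrow> nat \<Rightarrow> real) \<Rightarrow> (nat \<Rightarrow> nat \<Rightarrow> real)" where
  "mscale c A = (\<lambda>i j. c * A i j)"

definition meq :: "nat \<Rightarrow> (nat \<Rightarrow> nat \<Rightarrow> real) \<Rightarrow> (nat \<Rightarrow> nat \<Rightarrow> real) \<Rightarrow> bool" where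
  "meq m A B \<longleftrightarrow> (\<forall>i<m. \<forall>j<m. A i j = B i j)"

definition idm :: "nat \<Rightarrow> nat \<Rightarrow> real" where
  "idm i j = (if i = j then 1 else 0)"

definition antisym_mat :: "nat \<Rightarrow> (nat \<Rightarrow> nat \<Rightarrow> real) \<Rightarrow> bool" where
  "antisym_mat m A \<longleftrightarrow> (\<forall>i<m. \<forall>j<m. A j i = - A i j)"

definition sym_mat :: "nat \<Rightarrow> (nat \<Rightarrow> nat \<Rightarrow> real) \<Rightarrow> bool" where
  "sym_mat m A \<longleftrightarrow> (\<forall>i<m. \<forall>j<m. A j i = A i j)"

definition orthogonal_mat :: "nat \<Rightarrow> (nat \<Rightarrow> nat \<Rightarrow> real) \<Rightarrow> bool" where
  "orthogonal_mat m Q \<longleftrightarrow> meq m (mmul m (mtr Q) Q) idm"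

text \<open>With p = m div 2 the index ranges are
  [0,p) (block of u), [p, m-p) (the middle index of w, only for m odd; empty
  for m even) and [m-p, m) (block of v).  Hence
  skewblk m L = [[0,0,-L^T],[0,0,0],[L,0,0]] (m odd), [[0,-L^T],[L,0]] (m even);
  symblk  m L = [[0,0, L^T],[0,0,0],[L,0,0]] (m odd), [[0, L^T],[L,0]] (m even);
  sgnblk  m   = diag(I,1,-I) (m odd), diag(I,-I) (m even).\<close>

definition skewblk :: "nat \<Rightarrow> (nat \<Rightarrow> nat \<Rightarrow> real) \<Rightarrow> (nat \<Rightarrow> nat \<Rightarrow> real)" where
  "skewblk m L = (\<lambda>i j.
     if i < m div 2 \<and> m - m div 2 \<le> j then - L (j - (m - m div 2)) i
     else if m - m div 2 \<le> i \<and> j < m div 2 then L (i - (m - m div 2)) j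
     else 0)"

definition symblk :: "nat \<Rightarrow> (nat \<Rightarrow> nat \<Rightarrow> real) \<Rightarrow> (nat \<Rightarrow> nat \<Rightarrow> real)" where
  "symblk m L = (\<lambda>i j.
     if i < m div 2 \<and> m - m div 2 \<le> j then L (j - (m - m div 2)) i
     else if m - m div 2 \<le> i \<and> j < m div 2 then L (i - (m - m div 2)) j
     else 0)"

definition sgnblk :: "nat \<Rightarrow> (nat \<Rightarrow> nat \<Rightarrow> real)" where
  "sgnblk m = (\<lambda>i j. if i = j then (if i < m - m div 2 then 1 else -1) else 0)"

definition enorm :: "nat \<Rightarrow> (nat \<Rightarrow> real) \<Rightarrow> real" where
  "enorm m v = sqrt (\<Sum>i<m. (v i)^2)"

definition cont_vecs :: "nat \<Rightarrow> ((nat \<Rightarrow> real) \<Rightarrow> real) \<Rightarrow> bool" where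
  "cont_vecs m g \<longleftrightarrow> (\<forall>z\<in>vecs m. \<forall>e>0. \<exists>d>0. \<forall>y\<in>vecs m.
      enorm m (\<lambda>i. y i - z i) < d \<longrightarrow> \<bar>g y - g z\<bar> < e)"

definition shift :: "(nat \<Rightarrow> real) \<Rightarrow> nat \<Rightarrow> real \<Rightarrow> (nat \<Rightarrow> real)" where
  "shift z i t = (\<lambda>l. z l + (if l = i then t else 0))"

text \<open>C-infinity on R^m: all iterated partial derivatives exist and are continuous.\<close>
definition smooth_vecs :: "nat \<Rightarrow> ((nat \<Rightarrow> real) \<Rightarrow> real) \<Rightarrow> bool" where
  "smooth_vecs m S \<longleftrightarrow> (\<exists>D :: nat list \<Rightarrow> (nat \<Rightarrow> real) \<Rightarrow> real.
      D [] = S \<and> (\<forall>is. cont_vecs m (D is)) \<and>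
      (\<forall>is i z. i < m \<longrightarrow> z \<in> vecs m \<longrightarrow>
          ((\<lambda>t. D is (shift z i t)) has_real_derivative D (i # is) z) (at 0)))"

definition gradv :: "nat \<Rightarrow> ((nat \<Rightarrow> real) \<Rightarrow> real) \<Rightarrow> (nat \<Rightarrow> real) \<Rightarrow> (nat \<Rightarrow> real)" where
  "gradv m S z = (\<lambda>i. if i < m then deriv (\<lambda>t. S (shift z i t)) 0 else 0)"

text \<open>Mesh: nodes x 0 < x 1 < ... < x N; cell I_j = [x (j-1), x j], j = 1..N;
the interface x_{j+1/2} is x j.  By periodicity x_{1/2} is identified with
x_{N+1/2}: interface N has left cell N and right cell 1.
A function of (V_h)^m at a fixed time is Z :: nat => nat => real poly, where
Z j i is the polynomial of component i (< m) on cell j (1..N).\<close>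

definition in_Vh :: "nat \<Rightarrow> nat \<Rightarrow> nat \<Rightarrow> (nat \<Rightarrow> nat \<Rightarrow> real poly) \<Rightarrow> bool" where
  "in_Vh m N k Z \<longleftrightarrow> (\<forall>j\<in>{1..N}. \<forall>i<m. degree (Z j i) \<le> k)"

definition cellv :: "nat \<Rightarrow> (nat \<Rightarrow> nat \<Rightarrow> real poly) \<Rightarrow> nat \<Rightarrow> real \<Rightarrow> (nat \<Rightarrow> real)" where
  "cellv m Z j y = (\<lambda>i. if i < m then poly (Z j i) y else 0)"

definition cellvd :: "nat \<Rightarrow> (nat \<Rightarrow> nat \<Rightarrow> real poly) \<Rightarrow> nat \<Rightarrow> real \<Rightarrow> (nat \<Rightarrow> real)" where
  "cellvd m Z j y = (\<lambda>i. if i < m then poly (pderiv (Z j i)) y else 0)"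

definition nxt :: "nat \<Rightarrow> nat \<Rightarrow> nat" where
  "nxt N l = (if l = N then 1 else Suc l)"

definition prv :: "nat \<Rightarrow> nat \<Rightarrow> nat" where
  "prv N j = (if j = 1 then N else j - 1)"

text \<open>Left limit v^- and right limit v^+ at the interface x_{l+1/2}, l = 1..N.\<close>
definition vminus :: "nat \<Rightarrow> (nat \<Rightarrow> real) \<Rightarrow> (nat \<Rightarrow> nat \<Rightarrow> real poly) \<Rightarrow> nat \<Rightarrow> (nat \<Rightarrow> real)" where
  "vminus m x Z l = cellv m Z l (x l)"

definition vplus :: "nat \<Rightarrow> (nat \<Rightarrow> real) \<Rightarrow> nat \<Rightarrow> (nat \<Rightarrow> nat \<Rightarrow> real poly) \<Rightarrow> nat \<Rightarrow> (nat \<Rightarrow> real)" where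
  "vplus m x N Z l = cellv m Z (nxt N l) (x (nxt N l - 1))"

definition avg :: "nat \<Rightarrow> (nat \<Rightarrow> real) \<Rightarrow> nat \<Rightarrow> (nat \<Rightarrow> nat \<Rightarrow> real poly) \<Rightarrow> nat \<Rightarrow> (nat \<Rightarrow> real)" where
  "avg m x N Z l = (\<lambda>i. (vplus m x N Z l i + vminus m x Z l i) / 2)"

definition jmp :: "nat \<Rightarrow> (nat \<Rightarrow> real) \<Rightarrow> nat \<Rightarrow> (nat \<Rightarrow> nat \<Rightarrow> real poly) \<Rightarrow> nat \<Rightarrow> (nat \<Rightarrow> real)" where
  "jmp m x N Z l = (\<lambda>i. vplus m x N Z l i - vminus m x Z l i)"

text \<open>Numerical flux K{z} + A[z] + B d/dt [z] at interface l (DZ = time derivative of Z).\<close>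
definition flux :: "nat \<Rightarrow> (nat \<Rightarrow> real) \<Rightarrow> nat \<Rightarrow> (nat \<Rightarrow> nat \<Rightarrow> real) \<Rightarrow> (nat \<Rightarrow> nat \<Rightarrow> real)
     \<Rightarrow> (nat \<Rightarrow> nat \<Rightarrow> real) \<Rightarrow> (nat \<Rightarrow> nat \<Rightarrow> real poly) \<Rightarrow> (nat \<Rightarrow> nat \<Rightarrow> real poly) \<Rightarrow> nat \<Rightarrow> (nat \<Rightarrow> real)" where
  "flux m x N K A B Z DZ l =
     (\<lambda>i. mv m K (avg m x N Z l) i + mv m A (jmp m x N Z l) i + mv m B (jmp m x N DZ l) i)"

definition dg_cell_eq where
  "dg_cell_eq m x N M K A B S Z DZ Phi j \<longleftrightarrow>
     integral {x (j - 1)..x j} (\<lambda>y. dotv m (mv m M (cellv m DZ j y)) (cellv m Phi j y))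
     - integral {x (j - 1)..x j} (\<lambda>y. dotv m (mv m K (cellv m Z j y)) (cellvd m Phi j y))
     + dotv m (flux m x N K A B Z DZ j) (cellv m Phi j (x j))
     - dotv m (flux m x N K A B Z DZ (prv N j)) (cellv m Phi j (x (j - 1)))
     = integral {x (j - 1)..x j} (\<lambda>y. dotv m (gradv m S (cellv m Z j y)) (cellv m Phi j y))"

text \<open>zh t is the DG solution at time t, dzh t its time derivative; the time
interval is [0,T].  zh is continuously differentiable in t (coefficientwise,
which is the same as in the finite-dimensional space V_h^m).\<close>
definition dg_solution where
  "dg_solution m N k x T M K A B S zh dzh \<longleftrightarrow>
     (\<forall>t\<in>{0..T}. in_Vh m N k (zh t) \<and> in_Vh m N k (dzh t)) \<and>
     (\<forall>j\<in>{1..N}. \<forall>i<m. \<forall>c. \<forall>t\<in>{0..T}.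
        ((\<lambda>s. coeff (zh s j i) c) has_real_derivative coeff (dzh t j i) c) (at t within {0..T})) \<and>
     (\<forall>j\<in>{1..N}. \<forall>i<m. \<forall>c. continuous_on {0..T} (\<lambda>t. coeff (dzh t j i) c)) \<and>
     (\<forall>t\<in>{0..T}. \<forall>Phi. in_Vh m N k Phi \<longrightarrow>
        (\<forall>j\<in>{1..N}. dg_cell_eq m x N M K A B S (zh t) (dzh t) Phi j))"

definition energy where
  "energy m x N K A S Z =
     (\<Sum>j=1..N. integral {x (j - 1)..x j}
        (\<lambda>y. S (cellv m Z j y) - dotv m (mv m K (cellvd m Z j y)) (cellv m Z j y) / 2))
     + (\<Sum>l=1..N. dotv m (\<lambda>i. mv m K (avg m x N Z l) i + mv m A (jmp m x N Z l) i)
                          (jmp m x N Z l)) / 2"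

definition gradv_dot_v where
  "gradv_dot_v m Q S z =
     (\<Sum>i\<in>{m - m div 2..<m}. mv m Q (gradv m S z) i * mv m Q z i)"

definition bulk_term where
  "bulk_term m x N Q S Z =
     (\<Sum>j=1..N. integral {x (j - 1)..x j}
        (\<lambda>y. S (cellv m Z j y) - gradv_dot_v m Q S (cellv m Z j y)))"

definition Atilde where
  "Atilde m Q A = mmul m (mtr Q) (mmul m (sgnblk m) (mmul m Q A))"

end

theory Submission
  imports Defs "Jordan_Normal_Form.Determinant"
begin

hide_const (open) Matrix.orthogonal_mat

lemma orth_right:
  assumes "orthogonal_mat m Q" shows "meq m (mmul m Q (mtr Q)) idm"
proof -
  define A where "A = mat m m (\<lambda>(i,j). Q j i)"
  define B where "B = mat m m (\<lambda>(i,j). Q i j)"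
  have Ac: "A \<in> carrier_mat m m" and Bc: "B \<in> carrier_mat m m" by (auto simp: A_def B_def)
  have "A * B = 1\<^sub>m m"
  proof (rule eq_matI)
    fix i j assume "i < dim_row (1\<^sub>m m :: real mat)" "j < dim_col (1\<^sub>m m :: real mat)"
    hence ij: "i < m" "j < m" by auto
    have "(A * B) $$ (i,j) = (\<Sum>l<m. Q l i * Q l j)"
      using ij by (simp add: A_def B_def scalar_prod_def atLeast0LessThan)
    also have "\<dots> = idm i j" using assms ij
      by (simp add: Defs.orthogonal_mat_def meq_def mmul_def mtr_def)
    finally show "(A * B) $$ (i,j) = 1\<^sub>m m $$ (i,j)" using ij by (simp add: idm_def)
  qed (auto simp: A_def B_def)
  hence BA: "B * A = 1\<^sub>m m" by (rule mat_mult_left_right_inverse[OF Ac Bc])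
  show ?thesis unfolding meq_def
  proof (intro allI impI)
    fix i j assume ij: "i < m" "j < m"
    have "mmul m Q (mtr Q) i j = (B * A) $$ (i,j)"
      using ij by (simp add: A_def B_def scalar_prod_def atLeast0LessThan mmul_def mtr_def)
    also have "\<dots> = idm i j" using ij BA by (simp add: idm_def)
    finally show "mmul m Q (mtr Q) i j = idm i j" .
  qed
qed

lemma mv_mmul: "mv m (mmul m A B) v = mv m A (mv m B v)"
proof (rule ext)
  fix i show "mv m (mmul m A B) v i = mv m A (mv m B v) i"
  proof (cases "i < m")
    case True
    have "(\<Sum>j<m. (\<Sum>l<m. A i l * B l j) * v j) = (\<Sum>j<m. \<Sum>l<m. A i l * B l j * v j)"
      by (simp add: sum_distrib_right)
    also have "\<dots> = (\<Sum>l<m. \<Sum>j<m. A i l * B l j * v j)" by (rule sum.swap)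
    also have "\<dots> = (\<Sum>l<m. A i l * (\<Sum>j<m. B l j * v j))"
      by (simp add: sum_distrib_left mult.assoc)
    finally show ?thesis using True unfolding mv_def mmul_def by simp
  qed (simp add: mv_def)
qed

lemma dotv_mv_tr: "dotv m (mv m A u) v = dotv m u (mv m (mtr A) v)"
  unfolding dotv_def mv_def mtr_def
  by (simp add: sum_distrib_left sum_distrib_right mult_ac, subst sum.swap, simp)

lemma mtr_mtr[simp]: "mtr (mtr A) = A" by (simp add: mtr_def)

lemma mv_meq: "meq m A B \<Longrightarrow> mv m A v = mv m B v"
  unfolding meq_def mv_def by (auto intro!: ext sum.cong)

lemma mv_idm: "mv m idm v = (\<lambda>i. if i < m then v i else 0)"
proof -
  have "(\<Sum>j<m. idm i j * v j) = (if i < m then v i else 0)" for i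
  proof (cases "i < m")
    case True
    have "(\<Sum>j<m. idm i j * v j) = (\<Sum>j<m. if i = j then v j else 0)"
      unfolding idm_def by (intro sum.cong) auto
    also have "\<dots> = v i" using True by (simp add: sum.delta)
    finally show ?thesis using True by simp
  next
    case False
    thus ?thesis unfolding idm_def by (auto intro!: sum.neutral)
  qed
  thus ?thesis unfolding mv_def by (auto intro!: ext)
qed

lemma dotv_cong: "(\<And>i. i < m \<Longrightarrow> u i = u' i) \<Longrightarrow> (\<And>i. i < m \<Longrightarrow> v i = v' i) \<Longrightarrow> dotv m u v = dotv m u' v'"
  unfolding dotv_def by simp

lemma mv_cong: "(\<And>i. i < m \<Longrightarrow> v i = v' i) \<Longrightarrow> mv m A v = mv m A v'"
  unfolding mv_def by (auto intro!: ext sum.cong)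

lemma dotv_idm_r[simp]: "dotv m u (mv m idm v) = dotv m u v"
  by (rule dotv_cong) (auto simp: mv_idm)
lemma dotv_idm_l[simp]: "dotv m (mv m idm v) u = dotv m v u"
  by (rule dotv_cong) (auto simp: mv_idm)

lemma mv_diff: "mv m A (\<lambda>i. a i - b i) = (\<lambda>i. mv m A a i - mv m A b i)"
  unfolding mv_def by (auto intro!: ext simp: algebra_simps sum_subtractf)
lemma mv_add: "mv m A (\<lambda>i. a i + b i) = (\<lambda>i. mv m A a i + mv m A b i)"
  unfolding mv_def by (auto intro!: ext simp: algebra_simps sum.distrib)
lemma mv_half: "mv m A (\<lambda>i. (a i + b i) / 2) = (\<lambda>i. (mv m A a i + mv m A b i) / 2)"
  unfolding mv_def by (auto intro!: ext simp: algebra_simps sum.distrib sum_divide_distrib[symmetric] add_divide_distrib)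
lemma dotv_diff_l: "dotv m (\<lambda>i. a i - b i) c = dotv m a c - dotv m b c"
  unfolding dotv_def by (simp add: algebra_simps sum_subtractf)
lemma dotv_diff_r: "dotv m c (\<lambda>i. a i - b i) = dotv m c a - dotv m c b"
  unfolding dotv_def by (simp add: algebra_simps sum_subtractf)
lemma dotv_add_l: "dotv m (\<lambda>i. a i + b i) c = dotv m a c + dotv m b c"
  unfolding dotv_def by (simp add: algebra_simps sum.distrib)
lemma dotv_add_r: "dotv m c (\<lambda>i. a i + b i) = dotv m c a + dotv m c b"
  unfolding dotv_def by (simp add: algebra_simps sum.distrib)
lemma dotv_half_l: "dotv m (\<lambda>i. (a i + b i) / 2) c = (dotv m a c + dotv m b c) / 2"
  unfolding dotv_def by (simp add: algebra_simps sum.distrib sum_divide_distrib[symmetric] add_divide_distrib)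
lemma dotv_half_r: "dotv m c (\<lambda>i. (a i + b i) / 2) = (dotv m c a + dotv m c b) / 2"
  unfolding dotv_def by (simp add: algebra_simps sum.distrib sum_divide_distrib[symmetric] add_divide_distrib)

lemma antisym_quad: "antisym_mat m A \<Longrightarrow> dotv m (mv m A v) v = 0"
proof -
  assume a: "antisym_mat m A"
  define X where "X = (\<Sum>i<m. \<Sum>j<m. A i j * v j * v i)"
  have e1: "dotv m (mv m A v) v = X"
    unfolding dotv_def mv_def X_def by (simp add: sum_distrib_right)
  have "X = (\<Sum>j<m. \<Sum>i<m. A i j * v j * v i)" unfolding X_def by (rule sum.swap)
  also have "\<dots> = (\<Sum>j<m. \<Sum>i<m. - (A j i * v i * v j))"
  proof (intro sum.cong refl)
    fix i j assume "i \<in> {..<m}" "j \<in> {..<m}"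
    hence "A j i = - A i j" using a unfolding antisym_mat_def by blast
    hence "A i j = - A j i" by linarith
    thus "A i j * v j * v i = - (A j i * v i * v j)" by simp
  qed
  also have "\<dots> = - X" unfolding X_def sum_negf ..
  finally have "X = - X" .
  hence "X = 0" by linarith
  thus ?thesis using e1 by simp
qed

definition Pm :: "nat \<Rightarrow> nat \<Rightarrow> nat \<Rightarrow> real" where
  "Pm m = (\<lambda>i j. if i = j \<and> m - m div 2 \<le> i then 1 else 0)"

lemma mv_Pm: "mv m (Pm m) b = (\<lambda>i. if i < m \<and> m - m div 2 \<le> i then b i else 0)"
proof (rule ext)
  fix i
  show "mv m (Pm m) b i = (if i < m \<and> m - m div 2 \<le> i then b i else 0)"
  proof (cases "i < m")
    case True
    have "(\<Sum>j<m. Pm m i j * b j) = (\<Sum>j<m. if i = j then (if m - m div 2 \<le> i then b j else 0) else 0)"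
      unfolding Pm_def by (intro sum.cong) auto
    also have "\<dots> = (if m - m div 2 \<le> i then b i else 0)" using True by (simp add: sum.delta)
    finally show ?thesis using True by (simp add: mv_def)
  qed (simp add: mv_def)
qed

lemma block_split:
  "dotv m (mv m (skewblk m L) a) b =
   dotv m (mv m (skewblk m L) a) (mv m (Pm m) b) - dotv m (mv m (skewblk m L) b) (mv m (Pm m) a)"
proof -
  define p where "p = m div 2"
  define q where "q = m - m div 2"
  have pq: "p \<le> q" unfolding p_def q_def by simp
  define E where "E = (\<lambda>a b :: nat \<Rightarrow> real. \<Sum>i<m. \<Sum>j<m. if q \<le> i \<and> j < p then L (i - q) j * a j * b i else 0)"
  define F where "F = (\<lambda>a b :: nat \<Rightarrow> real. \<Sum>i<m. \<Sum>j<m. if i < p \<and> q \<le> j then - L (j - q) i * a j * b i else 0)"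
  have K: "skewblk m L i j = (if i < p \<and> q \<le> j then - L (j - q) i else if q \<le> i \<and> j < p then L (i - q) j else 0)" for i j
    unfolding skewblk_def p_def q_def by simp
  have 1: "dotv m (mv m (skewblk m L) a) b = F a b + E a b" for a b
  proof -
    have "dotv m (mv m (skewblk m L) a) b = (\<Sum>i<m. \<Sum>j<m. skewblk m L i j * a j * b i)"
      unfolding dotv_def mv_def by (simp add: sum_distrib_right)
    also have "\<dots> = (\<Sum>i<m. \<Sum>j<m. (if i < p \<and> q \<le> j then - L (j - q) i * a j * b i else 0)
        + (if q \<le> i \<and> j < p then L (i - q) j * a j * b i else 0))"
      using pq by (intro sum.cong refl) (auto simp: K)
    also have "\<dots> = F a b + E a b" unfolding F_def E_def by (simp add: sum.distrib)
    finally show ?thesis .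
  qed
  have 2: "dotv m (mv m (skewblk m L) a) (mv m (Pm m) b) = E a b" for a b
  proof -
    have "dotv m (mv m (skewblk m L) a) (mv m (Pm m) b)
       = (\<Sum>i<m. \<Sum>j<m. skewblk m L i j * a j * (if q \<le> i then b i else 0))"
      unfolding dotv_def mv_Pm by (simp add: mv_def sum_distrib_right q_def)
    also have "\<dots> = E a b" unfolding E_def
      using pq by (intro sum.cong refl) (auto simp: K)
    finally show ?thesis .
  qed
  have 3: "F a b = - E b a" for a b
  proof -
    have "F a b = (\<Sum>j<m. \<Sum>i<m. if i < p \<and> q \<le> j then - L (j - q) i * a j * b i else 0)"
      unfolding F_def by (rule sum.swap)
    also have "\<dots> = (\<Sum>j<m. \<Sum>i<m. - (if q \<le> j \<and> i < p then L (j - q) i * b i * a j else 0))"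
      by (intro sum.cong refl) auto
    also have "\<dots> = - E b a" unfolding E_def by (simp add: sum_negf)
    finally show ?thesis .
  qed
  show ?thesis using 1[of a b] 2[of a b] 2[of b a] 3[of a b] by simp
qed

definition Pim :: "nat \<Rightarrow> (nat \<Rightarrow> nat \<Rightarrow> real) \<Rightarrow> nat \<Rightarrow> nat \<Rightarrow> real" where
  "Pim m Q = mmul m (mtr Q) (mmul m (Pm m) Q)"

definition bil where "bil m K Q a b = dotv m (mv m K a) (mv m (Pim m Q) b)"

lemma K_split:
  assumes Q: "Defs.orthogonal_mat m Q"
    and KQ: "meq m K (mmul m (mtr Q) (mmul m (skewblk m L) Q))"
  shows "dotv m (mv m K a) b = bil m K Q a b - bil m K Q b a"
proof -
  have QQ: "meq m (mmul m Q (mtr Q)) idm" by (rule orth_right[OF Q])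
  define X where "X = (\<lambda>a. mv m (skewblk m L) (mv m Q a))"
  have mK: "mv m K a = mv m (mtr Q) (X a)" for a
    unfolding X_def by (simp add: mv_meq[OF KQ] mv_mmul)
  have d: "dotv m (mv m K a) c = dotv m (X a) (mv m Q c)" for a c
    by (simp add: mK dotv_mv_tr)
  have b: "bil m K Q a b = dotv m (X a) (mv m (Pm m) (mv m Q b))" for a b
  proof -
    have "bil m K Q a b = dotv m (X a) (mv m Q (mv m (Pim m Q) b))"
      unfolding bil_def by (rule d)
    also have "mv m Q (mv m (Pim m Q) b) = mv m (mmul m Q (mtr Q)) (mv m (Pm m) (mv m Q b))"
      unfolding Pim_def by (simp add: mv_mmul)
    also have "\<dots> = mv m idm (mv m (Pm m) (mv m Q b))" by (rule mv_meq[OF QQ])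
    finally show ?thesis by simp
  qed
  show ?thesis unfolding b d X_def by (rule block_split)
qed

lemma mtr_Pm[simp]: "mtr (Pm m) = Pm m"
  unfolding mtr_def Pm_def by (auto intro!: ext)

lemma sum_delta_mult: "i < (m::nat) \<Longrightarrow> (\<Sum>j<m. (if i = j then c else 0) * Y j) = c * (Y i :: real)"
proof -
  assume i: "i < m"
  have "(\<Sum>j<m. (if i = j then c else 0) * Y j) = (\<Sum>j<m. if i = j then c * Y j else 0)"
    by (intro sum.cong) auto
  also have "\<dots> = c * Y i" using i by (subst sum.delta') auto
  finally show ?thesis .
qed

lemma sgn_dot: "dotv m (mv m (sgnblk m) Y) Z = dotv m Y Z - 2 * dotv m (mv m (Pm m) Y) Z"
proof -
  have "dotv m (mv m (sgnblk m) Y) Z = (\<Sum>i<m. Y i * Z i - 2 * ((if m - m div 2 \<le> i then Y i else 0) * Z i))"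
  proof (unfold dotv_def, intro sum.cong refl)
    fix i assume i: "i \<in> {..<m}"
    have "mv m (sgnblk m) Y i = (\<Sum>j<m. (if i = j then (if i < m - m div 2 then 1 else -1) else 0) * Y j)"
      using i unfolding mv_def sgnblk_def by simp
    also have "\<dots> = (if i < m - m div 2 then 1 else -1) * Y i" using i by (simp add: sum_delta_mult)
    finally show "mv m (sgnblk m) Y i * Z i = Y i * Z i - 2 * ((if m - m div 2 \<le> i then Y i else 0) * Z i)"
      by auto
  qed
  also have "\<dots> = dotv m Y Z - 2 * dotv m (mv m (Pm m) Y) Z"
    unfolding dotv_def mv_Pm by (simp add: sum_subtractf sum_distrib_left)
  finally show ?thesis .
qed

lemma Atilde_quad:
  assumes Q: "Defs.orthogonal_mat m Q"
  shows "dotv m (mv m (Atilde m Q A) J) J = dotv m (mv m A J) J - 2 * dotv m (mv m A J) (mv m (Pim m Q) J)"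
proof -
  define w where "w = mv m A J"
  have QTQ: "meq m (mmul m (mtr Q) Q) idm" using Q unfolding Defs.orthogonal_mat_def .
  have "dotv m (mv m (Atilde m Q A) J) J = dotv m (mv m (sgnblk m) (mv m Q w)) (mv m Q J)"
    unfolding Atilde_def w_def by (simp add: mv_mmul dotv_mv_tr)
  also have "\<dots> = dotv m (mv m Q w) (mv m Q J) - 2 * dotv m (mv m (Pm m) (mv m Q w)) (mv m Q J)"
    by (rule sgn_dot)
  also have "dotv m (mv m Q w) (mv m Q J) = dotv m w J"
  proof -
    have "dotv m (mv m Q w) (mv m Q J) = dotv m w (mv m (mmul m (mtr Q) Q) J)"
      by (simp add: dotv_mv_tr mv_mmul)
    also have "\<dots> = dotv m w J" by (simp add: mv_meq[OF QTQ])
    finally show ?thesis .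
  qed
  also have "dotv m (mv m (Pm m) (mv m Q w)) (mv m Q J) = dotv m w (mv m (Pim m Q) J)"
    unfolding Pim_def by (simp add: dotv_mv_tr mv_mmul)
  finally show ?thesis unfolding w_def .
qed

lemma mmul_assoc: "mmul m (mmul m A B) C = mmul m A (mmul m B C)"
proof (intro ext)
  fix i j
  have "(\<Sum>l<m. (\<Sum>r<m. A i r * B r l) * C l j) = (\<Sum>l<m. \<Sum>r<m. A i r * B r l * C l j)"
    by (simp add: sum_distrib_right)
  also have "\<dots> = (\<Sum>r<m. \<Sum>l<m. A i r * B r l * C l j)" by (rule sum.swap)
  also have "\<dots> = (\<Sum>r<m. A i r * (\<Sum>l<m. B r l * C l j))" by (simp add: sum_distrib_left mult.assoc)
  finally show "mmul m (mmul m A B) C i j = mmul m A (mmul m B C) i j" unfolding mmul_def .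
qed

lemma mmul_mscale_r: "mmul m A (mscale c B) = mscale c (mmul m A B)"
  unfolding mmul_def mscale_def by (auto intro!: ext simp: sum_distrib_left mult_ac)
lemma mmul_mscale_l: "mmul m (mscale c A) B = mscale c (mmul m A B)"
  unfolding mmul_def mscale_def by (auto intro!: ext simp: sum_distrib_left mult_ac)
lemma meq_mmul_l: "meq m B B' \<Longrightarrow> meq m (mmul m A B) (mmul m A B')"
  unfolding meq_def mmul_def by auto
lemma meq_mmul_r: "meq m A A' \<Longrightarrow> meq m (mmul m A B) (mmul m A' B)"
  unfolding meq_def mmul_def by auto
lemma meq_mscale: "meq m A B \<Longrightarrow> meq m (mscale c A) (mscale c B)"
  unfolding meq_def mscale_def by auto
lemma meq_trans: "meq m A B \<Longrightarrow> meq m B C \<Longrightarrow> meq m A C"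
  unfolding meq_def by auto
lemma mmul_idm_l: "meq m (mmul m idm B) B"
  unfolding meq_def mmul_def using sum_delta_mult[of _ m 1 "\<lambda>l. B l _"] by (simp add: idm_def)

lemma sgn_sym: "meq m (mmul m (sgnblk m) (symblk m L)) (mscale (-1) (skewblk m L))"
  unfolding meq_def
proof (intro allI impI)
  fix i j assume ij: "i < m" "j < m"
  have "mmul m (sgnblk m) (symblk m L) i j = (if i < m - m div 2 then 1 else -1) * symblk m L i j"
    unfolding mmul_def sgnblk_def using sum_delta_mult[OF ij(1), of "if i < m - m div 2 then 1 else -1" "\<lambda>l. symblk m L l j"]
    by simp
  also have "\<dots> = mscale (-1) (skewblk m L) i j"
    unfolding symblk_def skewblk_def mscale_def by auto
  finally show "mmul m (sgnblk m) (symblk m L) i j = mscale (-1) (skewblk m L) i j" .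
qed

lemma Atilde_antisym:
  assumes Q: "Defs.orthogonal_mat m Q" and K: "antisym_mat m K"
    and KQ: "meq m K (mmul m (mtr Q) (mmul m (skewblk m L) Q))"
    and AQ: "meq m A (mscale \<alpha> (mmul m (mtr Q) (mmul m (symblk m L) Q)))"
  shows "antisym_mat m (Atilde m Q A)"
proof -
  have QQ: "meq m (mmul m Q (mtr Q)) idm" by (rule orth_right[OF Q])
  have 1: "meq m (mmul m Q A) (mscale \<alpha> (mmul m (symblk m L) Q))"
  proof -
    have "meq m (mmul m Q A) (mmul m Q (mscale \<alpha> (mmul m (mtr Q) (mmul m (symblk m L) Q))))"
      by (rule meq_mmul_l[OF AQ])
    moreover have "mmul m Q (mscale \<alpha> (mmul m (mtr Q) (mmul m (symblk m L) Q)))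
        = mscale \<alpha> (mmul m (mmul m Q (mtr Q)) (mmul m (symblk m L) Q))"
      by (simp add: mmul_mscale_r mmul_assoc)
    moreover have "meq m (mscale \<alpha> (mmul m (mmul m Q (mtr Q)) (mmul m (symblk m L) Q)))
        (mscale \<alpha> (mmul m (symblk m L) Q))"
      by (intro meq_mscale meq_trans[OF meq_mmul_r[OF QQ] mmul_idm_l])
    ultimately show ?thesis by (metis meq_trans)
  qed
  have 2: "meq m (mmul m (sgnblk m) (mmul m Q A)) (mscale (-\<alpha>) (mmul m (skewblk m L) Q))"
  proof -
    have "meq m (mmul m (sgnblk m) (mmul m Q A)) (mmul m (sgnblk m) (mscale \<alpha> (mmul m (symblk m L) Q)))"
      by (rule meq_mmul_l[OF 1])
    moreover have "mmul m (sgnblk m) (mscale \<alpha> (mmul m (symblk m L) Q))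
        = mscale \<alpha> (mmul m (mmul m (sgnblk m) (symblk m L)) Q)"
      by (simp add: mmul_mscale_r mmul_assoc)
    moreover have "meq m (mscale \<alpha> (mmul m (mmul m (sgnblk m) (symblk m L)) Q))
        (mscale \<alpha> (mmul m (mscale (-1) (skewblk m L)) Q))"
      by (intro meq_mscale meq_mmul_r sgn_sym)
    moreover have "mscale \<alpha> (mmul m (mscale (-1) (skewblk m L)) Q) = mscale (-\<alpha>) (mmul m (skewblk m L) Q)"
      unfolding mmul_mscale_l by (simp add: mscale_def)
    ultimately show ?thesis by (metis meq_trans)
  qed
  have 3: "meq m (Atilde m Q A) (mscale (-\<alpha>) K)"
  proof -
    have "meq m (Atilde m Q A) (mmul m (mtr Q) (mscale (-\<alpha>) (mmul m (skewblk m L) Q)))"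
      unfolding Atilde_def by (rule meq_mmul_l[OF 2])
    moreover have "mmul m (mtr Q) (mscale (-\<alpha>) (mmul m (skewblk m L) Q)) = mscale (-\<alpha>) (mmul m (mtr Q) (mmul m (skewblk m L) Q))"
      by (simp add: mmul_mscale_r)
    moreover have "meq m (mscale (-\<alpha>) (mmul m (mtr Q) (mmul m (skewblk m L) Q))) (mscale (-\<alpha>) K)"
      using KQ unfolding meq_def mscale_def by auto
    ultimately show ?thesis by (metis meq_trans)
  qed
  show ?thesis unfolding antisym_mat_def
  proof (intro allI impI)
    fix i j assume ij: "i < m" "j < m"
    have "K j i = - K i j" using K ij unfolding antisym_mat_def by blast
    moreover have "Atilde m Q A j i = - \<alpha> * K j i" "Atilde m Q A i j = - \<alpha> * K i j"
      using 3 ij unfolding meq_def mscale_def by auto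
    ultimately show "Atilde m Q A j i = - Atilde m Q A i j" by simp
  qed
qed

lemma cell_identity:
  fixes s g h kk dd :: "real \<Rightarrow> real"
  assumes ab: "a \<le> b" and cs: "continuous_on {a..b} s" and cg: "continuous_on {a..b} g"
    and ch: "continuous_on {a..b} h" and dd: "(dd has_integral (Bb - Ba)) {a..b}"
    and kk: "\<And>y. kk y = dd y - 2 * h y"
    and eq: "- integral {a..b} h + Fb - Fa = integral {a..b} g"
  shows "integral {a..b} (\<lambda>y. s y - kk y / 2) = integral {a..b} (\<lambda>y. s y - g y) + Fb - Fa - (Bb - Ba) / 2"
proof -
  have i_s: "s integrable_on {a..b}" and ig: "g integrable_on {a..b}" and ih: "h integrable_on {a..b}"
    using cs cg ch by (auto intro: integrable_continuous_interval)
  have idd: "dd integrable_on {a..b}" and vdd: "integral {a..b} dd = Bb - Ba" using dd by auto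
  have "(\<lambda>y. s y - kk y / 2) = (\<lambda>y. (s y - g y) + (g y + h y) - dd y / 2)"
    by (rule ext) (simp add: kk field_simps)
  hence "integral {a..b} (\<lambda>y. s y - kk y / 2) = integral {a..b} (\<lambda>y. s y - g y) + (integral {a..b} g + integral {a..b} h) - integral {a..b} dd / 2"
    using i_s ig ih idd
    by (simp add: integral_diff integral_add integrable_diff integrable_add integral_divide integrable_on_divide)
  thus ?thesis using vdd eq by simp
qed

definition PhiZ :: "nat \<Rightarrow> (nat \<Rightarrow> nat \<Rightarrow> real) \<Rightarrow> (nat \<Rightarrow> nat \<Rightarrow> real poly) \<Rightarrow> nat \<Rightarrow> nat \<Rightarrow> real poly" where
  "PhiZ m P Z = (\<lambda>j i. \<Sum>l<m. Polynomial.smult (P i l) (Z j l))"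

lemma cellv_PhiZ: "cellv m (PhiZ m P Z) j y = mv m P (cellv m Z j y)"
  unfolding cellv_def PhiZ_def mv_def by (auto intro!: ext sum.cong simp: poly_sum)

lemma pderiv_sum': "pderiv (sum f A) = (\<Sum>x\<in>A. pderiv (f x))"
  by (induction A rule: infinite_finite_induct) (simp_all add: pderiv_add)

lemma cellvd_PhiZ: "cellvd m (PhiZ m P Z) j y = mv m P (cellvd m Z j y)"
  unfolding cellvd_def PhiZ_def mv_def by (auto intro!: ext sum.cong simp: poly_sum pderiv_sum' pderiv_smult)

lemma in_Vh_PhiZ: "in_Vh m N k Z \<Longrightarrow> in_Vh m N k (PhiZ m P Z)"
  unfolding in_Vh_def PhiZ_def
  by (auto intro!: degree_sum_le order.trans[OF degree_smult_le])

lemma M_vanish: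
  assumes M: "antisym_mat m M"
    and MQ: "\<forall>i<m. \<forall>j. m - m div 2 \<le> j \<and> j < m \<longrightarrow> mmul m M (mtr Q) i j = 0"
  shows "dotv m (mv m M a) (mv m (Pim m Q) b) = 0"
proof -
  have z: "mv m M (mv m (Pim m Q) b) = (\<lambda>i. 0)"
  proof -
    have "mv m M (mv m (Pim m Q) b) = mv m (mmul m M (mtr Q)) (mv m (Pm m) (mv m Q b))"
      unfolding Pim_def by (simp add: mv_mmul)
    also have "\<dots> = (\<lambda>i. 0)"
      unfolding mv_Pm using MQ by (auto intro!: ext sum.neutral simp: mv_def)
    finally show ?thesis .
  qed
  have t: "mv m (mtr M) v i = - mv m M v i" for v i
  proof -
    have "\<forall>j<m. mtr M i j = - M i j" if "i < m"
      using M that unfolding antisym_mat_def mtr_def by blast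
    thus ?thesis unfolding mv_def by (auto simp: sum_negf[symmetric] intro!: sum.cong)
  qed
  have "dotv m (mv m M a) (mv m (Pim m Q) b) = dotv m a (mv m (mtr M) (mv m (Pim m Q) b))"
    by (rule dotv_mv_tr)
  also have "\<dots> = 0" unfolding dotv_def t z by simp
  finally show ?thesis .
qed

lemma B_vanish:
  assumes B: "meq m B (mscale \<beta> M)" and M: "antisym_mat m M"
    and MQ: "\<forall>i<m. \<forall>j. m - m div 2 \<le> j \<and> j < m \<longrightarrow> mmul m M (mtr Q) i j = 0"
  shows "dotv m (mv m B a) (mv m (Pim m Q) b) = 0"
proof -
  have "mv m B a = (\<lambda>i. \<beta> * mv m M a i)"
    unfolding mv_meq[OF B] by (auto simp: mv_def mscale_def sum_distrib_left mult_ac intro!: ext)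
  hence "dotv m (mv m B a) (mv m (Pim m Q) b) = \<beta> * dotv m (mv m M a) (mv m (Pim m Q) b)"
    by (simp add: dotv_def sum_distrib_left mult_ac)
  thus ?thesis using M_vanish[OF M MQ] by simp
qed

lemma grad_dot: "dotv m g (mv m (Pim m Q) z) = (\<Sum>i\<in>{m - m div 2..<m}. mv m Q g i * mv m Q z i)"
proof -
  have "dotv m g (mv m (Pim m Q) z) = dotv m (mv m Q g) (mv m (Pm m) (mv m Q z))"
    unfolding Pim_def by (simp add: mv_mmul dotv_mv_tr)
  also have "\<dots> = (\<Sum>i<m. if m - m div 2 \<le> i then mv m Q g i * mv m Q z i else 0)"
    unfolding dotv_def mv_Pm by (intro sum.cong) auto
  also have "\<dots> = (\<Sum>i\<in>{i\<in>{..<m}. m - m div 2 \<le> i}. mv m Q g i * mv m Q z i)"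
    by (rule sum.inter_filter[symmetric]) simp
  also have "{i\<in>{..<m}. m - m div 2 \<le> i} = {m - m div 2..<m}" by auto
  finally show ?thesis .
qed

lemma cont_vecs_comp:
  fixes c :: "real \<Rightarrow> nat \<Rightarrow> real" and U :: "real set"
  assumes h: "cont_vecs m h" and c: "\<And>y. y \<in> U \<Longrightarrow> c y \<in> vecs m"
    and cc: "\<And>i. i < m \<Longrightarrow> continuous_on U (\<lambda>y. c y i)"
  shows "continuous_on U (\<lambda>y. h (c y))"
proof -
 have "\<forall>x\<in>U. \<forall>e>0. \<exists>\<delta>>0. \<forall>x'\<in>U. dist x' x < \<delta> \<longrightarrow> dist (h (c x')) (h (c x)) < e"
 proof (intro ballI allI impI)
  fix x e assume x: "x \<in> U" and e: "(0::real) < e"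
  obtain d where d: "d > 0" and hd: "\<forall>y\<in>vecs m. enorm m (\<lambda>i. y i - c x i) < d \<longrightarrow> \<bar>h y - h (c x)\<bar> < e"
    using h c[OF x] e unfolding cont_vecs_def by blast
  define \<phi> where "\<phi> = (\<lambda>y. enorm m (\<lambda>i. c y i - c x i))"
  have c\<phi>: "continuous_on U \<phi>" unfolding \<phi>_def enorm_def
    by (intro continuous_intros cc) auto
  have \<phi>0: "\<phi> x = 0" unfolding \<phi>_def enorm_def by simp
  obtain \<delta> where \<delta>: "\<delta> > 0" and h\<delta>: "\<forall>x'\<in>U. dist x' x < \<delta> \<longrightarrow> dist (\<phi> x') (\<phi> x) < d"
    using c\<phi> x d unfolding continuous_on_iff by blast
  show "\<exists>\<delta>>0. \<forall>x'\<in>U. dist x' x < \<delta> \<longrightarrow> dist (h (c x')) (h (c x)) < e"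
  proof (intro exI[of _ \<delta>] conjI ballI impI \<delta>)
    fix x' assume "x' \<in> U" "dist x' x < \<delta>"
    hence "dist (\<phi> x') 0 < d" using h\<delta> \<phi>0 by auto
    moreover have "\<phi> x' \<ge> 0" unfolding \<phi>_def enorm_def by (intro real_sqrt_ge_zero sum_nonneg) auto
    ultimately have "\<phi> x' < d" by (simp add: dist_real_def)
    thus "dist (h (c x')) (h (c x)) < e" using hd c[OF \<open>x' \<in> U\<close>] unfolding \<phi>_def dist_real_def by blast
  qed
 qed
 thus ?thesis by (simp only: continuous_on_iff)
qed

lemma cont_mv:
  assumes "\<And>j. j < m \<Longrightarrow> continuous_on U (\<lambda>y. v y j)"
  shows "continuous_on U (\<lambda>y. mv m Q (v y) i)"
proof (cases "i < m")
  case True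
  have e: "(\<lambda>y. mv m Q (v y) i) = (\<lambda>y. \<Sum>j<m. Q i j * v y j)" using True by (simp add: mv_def)
  show ?thesis unfolding e by (intro continuous_on_sum continuous_on_mult continuous_on_const assms) auto
qed (simp add: mv_def)

lemma gradv_D:
  assumes D: "\<forall>is i z. i < m \<longrightarrow> z \<in> vecs m \<longrightarrow>
          ((\<lambda>t. D is (shift z i t)) has_real_derivative D (i # is) z) (at 0)"
    and D0: "D [] = S" and z: "z \<in> vecs m" and i: "i < m"
  shows "gradv m S z i = D [i] z"
  using D i z unfolding gradv_def D0[symmetric] by (simp add: DERIV_imp_deriv)

lemma cellv_vecs: "cellv m Z j y \<in> vecs m" unfolding cellv_def vecs_def by auto

lemma cont_cellv: "i < m \<Longrightarrow> continuous_on U (\<lambda>y. cellv m Z j y i)"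
  unfolding cellv_def by (simp add: continuous_intros)

lemma bil_deriv:
  assumes da: "\<And>i. i < m \<Longrightarrow> ((\<lambda>y. a y i) has_real_derivative a' i) (at y)"
    and db: "\<And>i. i < m \<Longrightarrow> ((\<lambda>y. b y i) has_real_derivative b' i) (at y)"
  shows "((\<lambda>y. dotv m (mv m A (a y)) (mv m B (b y))) has_real_derivative
          (dotv m (mv m A a') (mv m B (b y)) + dotv m (mv m A (a y)) (mv m B b'))) (at y)"
proof -
  have e: "(\<lambda>y. dotv m (mv m A (a y)) (mv m B (b y))) = (\<lambda>y. \<Sum>i<m. (\<Sum>j<m. A i j * a y j) * (\<Sum>l<m. B i l * b y l))"
    unfolding dotv_def mv_def by (auto intro!: ext sum.cong)
  have "((\<lambda>y. \<Sum>i<m. (\<Sum>j<m. A i j * a y j) * (\<Sum>l<m. B i l * b y l)) has_real_derivative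
      (\<Sum>i<m. (\<Sum>j<m. A i j * a' j) * (\<Sum>l<m. B i l * b y l) + (\<Sum>l<m. B i l * b' l) * (\<Sum>j<m. A i j * a y j))) (at y)"
    by (intro DERIV_sum DERIV_mult DERIV_cmult da db) auto
  moreover have "(\<Sum>i<m. (\<Sum>j<m. A i j * a' j) * (\<Sum>l<m. B i l * b y l) + (\<Sum>l<m. B i l * b' l) * (\<Sum>j<m. A i j * a y j))
     = dotv m (mv m A a') (mv m B (b y)) + dotv m (mv m A (a y)) (mv m B b')"
    unfolding dotv_def mv_def by (simp add: sum.distrib mult.commute)
  ultimately show ?thesis unfolding e by simp
qed

lemma cellv_deriv: "i < m \<Longrightarrow> ((\<lambda>y. cellv m Z j y i) has_real_derivative cellvd m Z j y i) (at y)"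
  unfolding cellv_def cellvd_def by (simp only: if_True poly_DERIV)

lemma cellvd_deriv: "i < m \<Longrightarrow> ((\<lambda>y. cellvd m Z j y i) has_real_derivative cellvd m (\<lambda>j i. pderiv (Z j i)) j y i) (at y)"
  unfolding cellv_def cellvd_def by (simp only: if_True poly_DERIV)

lemma cell_ftc:
  assumes ab: "a \<le> b"
  shows "((\<lambda>y. bil m K Q (cellvd m Z j y) (cellv m Z j y) + bil m K Q (cellv m Z j y) (cellvd m Z j y))
     has_integral (bil m K Q (cellv m Z j b) (cellv m Z j b) - bil m K Q (cellv m Z j a) (cellv m Z j a))) {a..b}"
proof (rule fundamental_theorem_of_calculus[OF ab])
  fix y assume "y \<in> {a..b}"
  have "((\<lambda>y. bil m K Q (cellv m Z j y) (cellv m Z j y)) has_real_derivative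
     (bil m K Q (cellvd m Z j y) (cellv m Z j y) + bil m K Q (cellv m Z j y) (cellvd m Z j y))) (at y)"
    unfolding bil_def by (rule bil_deriv; rule cellv_deriv)
  thus "((\<lambda>y. bil m K Q (cellv m Z j y) (cellv m Z j y)) has_vector_derivative
     (bil m K Q (cellvd m Z j y) (cellv m Z j y) + bil m K Q (cellv m Z j y) (cellvd m Z j y))) (at y within {a..b})"
    by (simp add: has_real_derivative_iff_has_vector_derivative has_vector_derivative_at_within)
qed

lemma cont_bil_cell: "continuous_on U (\<lambda>y. bil m K Q (cellv m Z j y) (cellvd m Z j y))"
proof (rule DERIV_continuous_on)
  fix y
  show "((\<lambda>y. bil m K Q (cellv m Z j y) (cellvd m Z j y)) has_real_derivative
     (bil m K Q (cellvd m Z j y) (cellvd m Z j y) + bil m K Q (cellv m Z j y) (cellvd m (\<lambda>j i. pderiv (Z j i)) j y))) (at y within U)"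
    unfolding bil_def by (rule has_field_derivative_at_within, rule bil_deriv) (rule cellv_deriv cellvd_deriv; assumption)+
qed

lemma bil_half_l: "bil m K Q (\<lambda>i. (a i + b i) / 2) c = (bil m K Q a c + bil m K Q b c) / 2"
  unfolding bil_def mv_half dotv_half_l ..
lemma bil_diff_l: "bil m K Q (\<lambda>i. a i - b i) c = bil m K Q a c - bil m K Q b c"
  unfolding bil_def mv_diff dotv_diff_l ..
lemma bil_half_r: "bil m K Q c (\<lambda>i. (a i + b i) / 2) = (bil m K Q c a + bil m K Q c b) / 2"
  unfolding bil_def mv_half dotv_half_r ..
lemma bil_diff_r: "bil m K Q c (\<lambda>i. a i - b i) = bil m K Q c a - bil m K Q c b"
  unfolding bil_def mv_diff dotv_diff_r ..

lemma interface_identity: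
  assumes Q: "Defs.orthogonal_mat m Q" and M: "antisym_mat m M"
    and KQ: "meq m K (mmul m (mtr Q) (mmul m (skewblk m L) Q))"
    and B: "meq m B (mscale \<beta> M)"
    and MQ: "\<forall>i<m. \<forall>j. m - m div 2 \<le> j \<and> j < m \<longrightarrow> mmul m M (mtr Q) i j = 0"
    and F: "F = (\<lambda>i. mv m K (\<lambda>i. (a i + b i) / 2) i + mv m A (\<lambda>i. a i - b i) i + mv m B JD i)"
  shows "dotv m F (mv m (Pim m Q) b) - dotv m F (mv m (Pim m Q) a)
      - (bil m K Q b b - bil m K Q a a) / 2
      + dotv m (\<lambda>i. mv m K (\<lambda>i. (a i + b i) / 2) i + mv m A (\<lambda>i. a i - b i) i) (\<lambda>i. a i - b i) / 2
    = dotv m (mv m (Atilde m Q A) (\<lambda>i. a i - b i)) (\<lambda>i. a i - b i) / 2"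
proof -
  define J where "J = (\<lambda>i. a i - b i)"
  define av where "av = (\<lambda>i. (a i + b i) / 2)"
  have 1: "dotv m F (mv m (Pim m Q) b) - dotv m F (mv m (Pim m Q) a) = - dotv m F (mv m (Pim m Q) J)"
    unfolding J_def mv_diff dotv_diff_r by simp
  have 2: "dotv m F (mv m (Pim m Q) J) = bil m K Q av J + dotv m (mv m A J) (mv m (Pim m Q) J)"
    unfolding F dotv_add_l B_vanish[OF B M MQ] bil_def J_def av_def by simp
  have 3: "dotv m (\<lambda>i. mv m K av i + mv m A J i) J = bil m K Q av J - bil m K Q J av + dotv m (mv m A J) J"
    unfolding dotv_add_l K_split[OF Q KQ] ..
  have 4: "dotv m (mv m (Atilde m Q A) J) J = dotv m (mv m A J) J - 2 * dotv m (mv m A J) (mv m (Pim m Q) J)"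
    by (rule Atilde_quad[OF Q])
  have 5: "bil m K Q av J = (bil m K Q a a - bil m K Q a b + bil m K Q b a - bil m K Q b b) / 2"
    unfolding av_def J_def bil_half_l bil_diff_r by (simp add: field_simps)
  have 6: "bil m K Q J av = (bil m K Q a a + bil m K Q a b - bil m K Q b a - bil m K Q b b) / 2"
    unfolding av_def J_def bil_half_r bil_diff_l by (simp add: field_simps)
  show ?thesis using 1 2 3 4 5 6 unfolding J_def[symmetric] av_def[symmetric] by (simp add: field_simps)
qed

lemma sum_prv_nxt:
  assumes N: "N \<ge> 1"
  shows "(\<Sum>j=1..N. G (prv N j) j) = (\<Sum>l=1..N. G l (nxt N l))"
proof (rule sum.reindex_bij_witness[where i = "nxt N" and j = "prv N"])
  fix a assume "a \<in> {1..N}" thus "nxt N (prv N a) = a" "prv N a \<in> {1..N}"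
    unfolding nxt_def prv_def by auto
  fix b assume "b \<in> {1..N}" thus "prv N (nxt N b) = b" "nxt N b \<in> {1..N}"
    unfolding nxt_def prv_def using N by auto
next
  fix a assume "a \<in> {1..N}" thus "G (prv N a) (nxt N (prv N a)) = G (prv N a) a"
    unfolding nxt_def prv_def by auto
qed

lemma main_identity:
  assumes N: "N \<ge> 1"
    and mesh: "\<forall>j<N. x j < x (Suc j)"
    and M: "antisym_mat m M"
    and Q: "Defs.orthogonal_mat m Q"
    and KQ: "meq m K (mmul m (mtr Q) (mmul m (skewblk m L) Q))"
    and B: "meq m B (mscale \<beta> M)"
    and MQ: "\<forall>i<m. \<forall>j. m - m div 2 \<le> j \<and> j < m \<longrightarrow> mmul m M (mtr Q) i j = 0"
    and D0: "D [] = S" and Dc: "\<forall>is. cont_vecs m (D is)"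
    and Dd: "\<forall>is i z. i < m \<longrightarrow> z \<in> vecs m \<longrightarrow>
          ((\<lambda>t. D is (shift z i t)) has_real_derivative D (i # is) z) (at 0)"
    and Zin: "in_Vh m N k Z"
    and eqs: "\<forall>Phi. in_Vh m N k Phi \<longrightarrow> (\<forall>j\<in>{1..N}. dg_cell_eq m x N M K A B S Z DZ Phi j)"
  shows "energy m x N K A S Z = bulk_term m x N Q S Z
      + (\<Sum>l=1..N. dotv m (mv m (Atilde m Q A) (jmp m x N Z l)) (jmp m x N Z l)) / 2"
proof -
  define P where "P = Pim m Q"
  define Phi where "Phi = PhiZ m P Z"
  have eqj: "dg_cell_eq m x N M K A B S Z DZ Phi j" if "j \<in> {1..N}" for j
    using eqs in_Vh_PhiZ[OF Zin] that unfolding Phi_def by blast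
  define Fv where "Fv = (\<lambda>l w. dotv m (flux m x N K A B Z DZ l) (mv m P w))"
  define bb where "bb = (\<lambda>w. bil m K Q w w)"
  have cell: "integral {x (j - 1)..x j} (\<lambda>y. S (cellv m Z j y) - dotv m (mv m K (cellvd m Z j y)) (cellv m Z j y) / 2)
     = integral {x (j - 1)..x j} (\<lambda>y. S (cellv m Z j y) - gradv_dot_v m Q S (cellv m Z j y))
       + Fv j (cellv m Z j (x j)) - Fv (prv N j) (cellv m Z j (x (j - 1)))
       - (bb (cellv m Z j (x j)) - bb (cellv m Z j (x (j - 1)))) / 2" if j: "j \<in> {1..N}" for j
  proof (rule cell_identity)
    have "j - 1 < N" "Suc (j - 1) = j" using j by auto
    thus "x (j - 1) \<le> x j" using mesh by (metis less_imp_le)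
    show "continuous_on {x (j - 1)..x j} (\<lambda>y. S (cellv m Z j y))"
      using cont_vecs_comp[OF Dc[rule_format, of "[]"], of "{x (j - 1)..x j}" "\<lambda>y. cellv m Z j y"]
      by (simp add: D0 cellv_vecs cont_cellv)
    have cg: "continuous_on {x (j - 1)..x j} (\<lambda>y. gradv m S (cellv m Z j y) i)" if i: "i < m" for i
    proof -
      have e: "(\<lambda>y. gradv m S (cellv m Z j y) i) = (\<lambda>y. D [i] (cellv m Z j y))"
        using gradv_D[OF Dd D0 cellv_vecs i] by (intro ext) 
      show ?thesis unfolding e
        using cont_vecs_comp[OF Dc[rule_format, of "[i]"], of "{x (j - 1)..x j}" "\<lambda>y. cellv m Z j y"]
        by (simp add: cellv_vecs cont_cellv)
    qed
    show "continuous_on {x (j - 1)..x j} (\<lambda>y. gradv_dot_v m Q S (cellv m Z j y))"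
      unfolding gradv_dot_v_def
      by (intro continuous_on_sum continuous_on_mult cont_mv cg cont_cellv)
    show "continuous_on {x (j - 1)..x j} (\<lambda>y. bil m K Q (cellv m Z j y) (cellvd m Z j y))"
      by (rule cont_bil_cell)
    show "((\<lambda>y. bil m K Q (cellvd m Z j y) (cellv m Z j y) + bil m K Q (cellv m Z j y) (cellvd m Z j y))
       has_integral (bb (cellv m Z j (x j)) - bb (cellv m Z j (x (j - 1))))) {x (j - 1)..x j}"
      unfolding bb_def by (rule cell_ftc) fact
    fix y
    show "dotv m (mv m K (cellvd m Z j y)) (cellv m Z j y) =
      (bil m K Q (cellvd m Z j y) (cellv m Z j y) + bil m K Q (cellv m Z j y) (cellvd m Z j y))
      - 2 * bil m K Q (cellv m Z j y) (cellvd m Z j y)"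
      using K_split[OF Q KQ] by simp
  next
    have f1: "(\<lambda>y. dotv m (mv m M (cellv m DZ j y)) (cellv m Phi j y)) = (\<lambda>y. 0)"
      unfolding Phi_def cellv_PhiZ P_def M_vanish[OF M MQ] ..
    have f2: "(\<lambda>y. dotv m (mv m K (cellv m Z j y)) (cellvd m Phi j y)) = (\<lambda>y. bil m K Q (cellv m Z j y) (cellvd m Z j y))"
      unfolding Phi_def cellvd_PhiZ P_def bil_def ..
    have f3: "(\<lambda>y. dotv m (gradv m S (cellv m Z j y)) (cellv m Phi j y)) = (\<lambda>y. gradv_dot_v m Q S (cellv m Z j y))"
      unfolding Phi_def cellv_PhiZ P_def grad_dot gradv_dot_v_def ..
    have f4: "dotv m (flux m x N K A B Z DZ l) (cellv m Phi j w) = Fv l (cellv m Z j w)" for l w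
      unfolding Phi_def cellv_PhiZ Fv_def ..
    show "- integral {x (j - 1)..x j} (\<lambda>y. bil m K Q (cellv m Z j y) (cellvd m Z j y))
      + Fv j (cellv m Z j (x j)) - Fv (prv N j) (cellv m Z j (x (j - 1)))
      = integral {x (j - 1)..x j} (\<lambda>y. gradv_dot_v m Q S (cellv m Z j y))"
      using eqj[OF j] unfolding dg_cell_eq_def f1 f2 f3 f4 by simp
  qed
  define U where "U = (\<lambda>j. Fv j (cellv m Z j (x j)) - bb (cellv m Z j (x j)) / 2)"
  define G where "G = (\<lambda>l j. Fv l (cellv m Z j (x (j - 1))) - bb (cellv m Z j (x (j - 1))) / 2)"
  define iface where "iface = (\<lambda>l. dotv m (\<lambda>i. mv m K (avg m x N Z l) i + mv m A (jmp m x N Z l) i) (jmp m x N Z l))"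
  define atq where "atq = (\<lambda>l. dotv m (mv m (Atilde m Q A) (jmp m x N Z l)) (jmp m x N Z l))"
  have "energy m x N K A S Z = (\<Sum>j=1..N. integral {x (j - 1)..x j} (\<lambda>y. S (cellv m Z j y) - gradv_dot_v m Q S (cellv m Z j y)) + (U j - G (prv N j) j)) + (\<Sum>l=1..N. iface l) / 2"
    unfolding energy_def iface_def
    by (intro arg_cong2[where f = "(+)"] refl arg_cong2[where f = "(/)"] sum.cong refl) (simp only: cell U_def G_def, simp add: field_simps)
  also have "\<dots> = bulk_term m x N Q S Z + ((\<Sum>j=1..N. U j) - (\<Sum>l=1..N. G l (nxt N l)) + (\<Sum>l=1..N. iface l) / 2)"
    unfolding bulk_term_def sum.distrib sum_subtractf sum_prv_nxt[OF N] by simp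
  also have "(\<Sum>j=1..N. U j) - (\<Sum>l=1..N. G l (nxt N l)) + (\<Sum>l=1..N. iface l) / 2 = (\<Sum>l=1..N. atq l) / 2"
  proof -
    have "U l - G l (nxt N l) + iface l / 2 = atq l / 2" for l
    proof -
      have vp: "cellv m Z (nxt N l) (x (nxt N l - 1)) = vplus m x N Z l" by (simp add: vplus_def)
      have vm: "cellv m Z l (x l) = vminus m x Z l" by (simp add: vminus_def)
      have "U l - G l (nxt N l) + iface l / 2 =
        dotv m (flux m x N K A B Z DZ l) (mv m (Pim m Q) (vminus m x Z l)) - dotv m (flux m x N K A B Z DZ l) (mv m (Pim m Q) (vplus m x N Z l))
      - (bil m K Q (vminus m x Z l) (vminus m x Z l) - bil m K Q (vplus m x N Z l) (vplus m x N Z l)) / 2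
      + dotv m (\<lambda>i. mv m K (\<lambda>i. (vplus m x N Z l i + vminus m x Z l i) / 2) i + mv m A (\<lambda>i. vplus m x N Z l i - vminus m x Z l i) i) (\<lambda>i. vplus m x N Z l i - vminus m x Z l i) / 2"
        unfolding U_def G_def iface_def vp vm Fv_def bb_def P_def avg_def jmp_def by (simp add: field_simps)
      also have "\<dots> = dotv m (mv m (Atilde m Q A) (\<lambda>i. vplus m x N Z l i - vminus m x Z l i)) (\<lambda>i. vplus m x N Z l i - vminus m x Z l i) / 2"
        by (rule interface_identity[OF Q M KQ B MQ]) (simp add: flux_def avg_def jmp_def)
      also have "\<dots> = atq l / 2" unfolding atq_def jmp_def ..
      finally show ?thesis .
    qed
    hence "(\<Sum>l=1..N. U l - G l (nxt N l) + iface l / 2) = (\<Sum>l=1..N. atq l / 2)" by (intro sum.cong refl)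
    thus ?thesis by (simp add: sum.distrib sum_subtractf sum_divide_distrib)
  qed
  finally show ?thesis unfolding atq_def .
qed

theorem corollary3p1:
  fixes m N k :: nat and x :: "nat \<Rightarrow> real" and T :: real
    and M K A B Q L :: "nat \<Rightarrow> nat \<Rightarrow> real" and \<beta> :: real
    and S :: "(nat \<Rightarrow> real) \<Rightarrow> real"
    and zh dzh :: "real \<Rightarrow> nat \<Rightarrow> nat \<Rightarrow> real poly"
  assumes N: "N \<ge> 1"
    and mesh: "\<forall>j<N. x j < x (Suc j)"
    and T: "T > 0"
    and M: "antisym_mat m M" and K: "antisym_mat m K"
    and S: "smooth_vecs m S"
    and A: "sym_mat m A"
    and Q: "orthogonal_mat m Q"
    and KQ: "meq m K (mmul m (mtr Q) (mmul m (skewblk m L) Q))"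
    and B: "meq m B (mscale \<beta> M)"
    and MQ: "\<forall>i<m. \<forall>j. m - m div 2 \<le> j \<and> j < m \<longrightarrow> mmul m M (mtr Q) i j = 0"
    and sol: "dg_solution m N k x T M K A B S zh dzh"
  shows "(\<forall>t\<in>{0..T}.
           energy m x N K A S (zh t) =
             bulk_term m x N Q S (zh t)
             + (\<Sum>l=1..N. dotv m (mv m (Atilde m Q A) (jmp m x N (zh t) l)) (jmp m x N (zh t) l)) / 2)
         \<and> (\<forall>\<alpha>\<in>{-1/2..1/2}. meq m A (mscale \<alpha> (mmul m (mtr Q) (mmul m (symblk m L) Q))) \<longrightarrow>
           antisym_mat m (Atilde m Q A) \<and>
           (\<forall>t\<in>{0..T}. energy m x N K A S (zh t) = bulk_term m x N Q S (zh t)))"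
proof -
  obtain D where D0: "D [] = S" and Dc: "\<forall>is. cont_vecs m (D is)"
    and Dd: "\<forall>is i z. i < m \<longrightarrow> z \<in> vecs m \<longrightarrow>
          ((\<lambda>t. D is (shift z i t)) has_real_derivative D (i # is) z) (at 0)"
    using S unfolding smooth_vecs_def by blast
  have part1: "\<forall>t\<in>{0..T}.
           energy m x N K A S (zh t) =
             bulk_term m x N Q S (zh t)
             + (\<Sum>l=1..N. dotv m (mv m (Atilde m Q A) (jmp m x N (zh t) l)) (jmp m x N (zh t) l)) / 2"
  proof
    fix t assume t: "t \<in> {0..T}"
    have Zin: "in_Vh m N k (zh t)"
      and eqs: "\<forall>Phi. in_Vh m N k Phi \<longrightarrow> (\<forall>j\<in>{1..N}. dg_cell_eq m x N M K A B S (zh t) (dzh t) Phi j)"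
      using sol t unfolding dg_solution_def by blast+
    show "energy m x N K A S (zh t) =
             bulk_term m x N Q S (zh t)
             + (\<Sum>l=1..N. dotv m (mv m (Atilde m Q A) (jmp m x N (zh t) l)) (jmp m x N (zh t) l)) / 2"
      by (rule main_identity[OF N mesh M Q KQ B MQ D0 Dc Dd Zin eqs])
  qed
  show ?thesis
  proof (rule conjI)
    show "\<forall>t\<in>{0..T}.
           energy m x N K A S (zh t) =
             bulk_term m x N Q S (zh t)
             + (\<Sum>l=1..N. dotv m (mv m (Atilde m Q A) (jmp m x N (zh t) l)) (jmp m x N (zh t) l)) / 2"
      by (rule part1)
  next
    show "\<forall>\<alpha>\<in>{-1/2..1/2}. meq m A (mscale \<alpha> (mmul m (mtr Q) (mmul m (symblk m L) Q))) \<longrightarrow>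
           antisym_mat m (Atilde m Q A) \<and>
           (\<forall>t\<in>{0..T}. energy m x N K A S (zh t) = bulk_term m x N Q S (zh t))"
    proof (intro ballI impI)
      fix \<alpha> :: real
      assume AQ: "meq m A (mscale \<alpha> (mmul m (mtr Q) (mmul m (symblk m L) Q)))"
      have anti: "antisym_mat m (Atilde m Q A)" by (rule Atilde_antisym[OF Q K KQ AQ])
      show "antisym_mat m (Atilde m Q A) \<and>
           (\<forall>t\<in>{0..T}. energy m x N K A S (zh t) = bulk_term m x N Q S (zh t))"
        using anti part1 antisym_quad[OF anti] by simp
    qed
  qed
qed

end
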